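(* Let $\tilde f$ satisfy (H1) and (H2), let $i\in\{0,1\}$ and $x\in\Lambda^-_i$, and let $\Lambda^-_i(x)$ be the connected component of $\Lambda^-_i$ containing $x$. Then: (1) $\Lambda^-_i(x)$ is a compact subset of $\tilde A_i$; (2) $\Lambda^-_i(x)\cap\Gamma_{i+1}\ne\emptyset$; (3) $\tilde f^{-1}(\Lambda^-_i(x))\subset\Lambda^-_i(\tilde f^{-1}(x))$; (4) there is a real number $M^-_i>0$, independent of $x$, such that $\mathrm{diam}\,p_1(\Lambda^-_i(x))<M^-_i$.
   Context: Let $\tilde f$ be a homeomorphism of $\mathbb{R}^2$ isotopic to the identity and commuting with $T(x,y)=(x+1,y)$; $p_1$ is the first coordinate projection. For a horizontal line $\Gamma$, $U^+_\Gamma$ and $U^-_\Gamma$ denote the open half-planes above and below $\Gamma$. Hypotheses: (H1) $\Gamma_0,\Gamma_1,\Gamma_2$ are horizontal lines with $\Gamma_0\subset U^+_{\Gamma_1}$, $\Gamma_1\subset U^+_{\Gamma_2}$, and $\tilde f(\Gamma_j)\subset U^-_{\Gamma_j}$ for $j=0,1,2$; (H2) $\tilde f^n(\Gamma_0)\cap\Gamma_2\ne\emptyset$ for every integer $n\ge1$. For $i\in\{0,1\}$, $\tilde A_i$ is the closed band between $\Gamma_i$ and $\Gamma_{i+1}$, and $\Lambda^-_i=\bigcap_{n\in\mathbb{N}}\big(\tilde f^n(\mathrm{Cl}(U^-_{\Gamma_i}))\cap\mathrm{Cl}(U^+_{\Gamma_{i+1}})\big)$. *)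

theory Defs
  imports "HOL-Analysis.Analysis"
begin

text \<open>The plane R^2 is modelled as real \<times> real; p_1 is fst.\<close>

definition T :: "real \<times> real \<Rightarrow> real \<times> real" where
  "T z = (fst z + 1, snd z)"

definition hline :: "real \<Rightarrow> (real \<times> real) set" where
  "hline c = {z. snd z = c}"
definition Uplus :: "real \<Rightarrow> (real \<times> real) set" where
  "Uplus c = {z. snd z > c}"
definition Uminus :: "real \<Rightarrow> (real \<times> real) set" where
  "Uminus c = {z. snd z < c}"

definition isotopic_to_id :: "(real \<times> real \<Rightarrow> real \<times> real) \<Rightarrow> bool" where
  "isotopic_to_id f \<longleftrightarrow>
     (\<exists>H :: real \<times> (real \<times> real) \<Rightarrow> real \<times> real.
        continuous_on ({0..1} \<times> UNIV) H \<and>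
        (\<forall>z. H (0, z) = z) \<and> (\<forall>z. H (1, z) = f z) \<and>
        (\<forall>t\<in>{0..1}. \<exists>g. homeomorphism UNIV UNIV (\<lambda>z. H (t, z)) g))"

definition band :: "(nat \<Rightarrow> real) \<Rightarrow> nat \<Rightarrow> (real \<times> real) set" where
  "band c i = {z. c (Suc i) \<le> snd z \<and> snd z \<le> c i}"

definition Lambda_minus ::
  "(real \<times> real \<Rightarrow> real \<times> real) \<Rightarrow> (nat \<Rightarrow> real) \<Rightarrow> nat \<Rightarrow> (real \<times> real) set" where
  "Lambda_minus f c i =
     (\<Inter>n. (f ^^ n) ` closure (Uminus (c i)) \<inter> closure (Uplus (c (Suc i))))"

end

theory Submission
  imports Defs
begin

lemma closure_Uminus: "closure (Uminus c) = {z. snd z \<le> c}"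
proof -
  have "closure {z::real\<times>real. inner ((0::real),(1::real)) z < c} = {z. inner ((0::real),(1::real)) z \<le> c}"
    by (rule closure_halfspace_lt) (simp add: zero_prod_def)
  then show ?thesis by (simp add: inner_prod_def Uminus_def)
qed

lemma closure_Uplus: "closure (Uplus c) = {z. snd z \<ge> c}"
proof -
  have "closure {z::real\<times>real. inner ((0::real),(-1::real)) z < -c} = {z. inner ((0::real),(-1::real)) z \<le> -c}"
    by (rule closure_halfspace_lt) (simp add: zero_prod_def)
  moreover have "{z::real\<times>real. inner ((0::real),(-1::real)) z < -c} = Uplus c"
    by (auto simp: Uplus_def inner_prod_def)
  moreover have "{z::real\<times>real. inner ((0::real),(-1::real)) z \<le> -c} = {z. snd z \<ge> c}"
    by (auto simp: inner_prod_def)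
  ultimately show ?thesis by simp
qed

locale P65 =
  fixes f g :: "real\<times>real \<Rightarrow> real\<times>real" and c :: "nat \<Rightarrow> real"
  assumes hom: "homeomorphism UNIV UNIV f g"
    and commT: "\<forall>z. f (T z) = T (f z)"
    and ord: "c 0 > c 1" "c 1 > c 2"
    and push: "\<forall>j\<le>2. f ` hline (c j) \<subseteq> Uminus (c j)"
    and H2: "\<forall>n::nat. n \<ge> 1 \<longrightarrow> (f ^^ n) ` hline (c 0) \<inter> hline (c 2) \<noteq> {}"
begin

lemma fg[simp]: "f (g y) = y" using homeomorphism_apply2[OF hom] by simp
lemma gf[simp]: "g (f y) = y" using homeomorphism_apply1[OF hom] by simp
lemma contf: "continuous_on A f" using hom
  by (meson continuous_on_subset homeomorphism_def top_greatest)
lemma contg: "continuous_on A g" using hom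
  by (meson continuous_on_subset homeomorphism_def top_greatest)
lemma injf: "inj f" by (metis gf injI)

lemma tr_nat: "f (u + (real n, 0)) = f u + (real n, 0)"
proof (induction n arbitrary: u)
  case 0 then show ?case by (simp add: zero_prod_def[symmetric])
next
  case (Suc n)
  have "u + (real (Suc n), 0) = T (u + (real n, 0))" by (simp add: T_def prod_eq_iff)
  then have "f (u + (real (Suc n), 0)) = T (f (u + (real n, 0)))" using commT by metis
  also have "\<dots> = T (f u + (real n, 0))" using Suc by simp
  also have "\<dots> = f u + (real (Suc n), 0)" by (simp add: T_def prod_eq_iff)
  finally show ?case .
qed

lemma tr: "f (u + (of_int k, 0)) = f u + (of_int k, 0)"
proof (cases "k \<ge> 0")
  case True
  then obtain n where "k = int n" by (metis nonneg_eq_int)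
  then show ?thesis using tr_nat by simp
next
  case False
  define n where "n = nat (-k)"
  have k: "k = - int n" using False by (simp add: n_def)
  have "u = (u + (of_int k, 0)) + (real n, 0)" using k by (simp add: prod_eq_iff)
  then have "f u = f ((u + (of_int k, 0)) + (real n, 0))" by (rule arg_cong)
  also have "\<dots> = f (u + (of_int k, 0)) + (real n, 0)" by (rule tr_nat)
  finally show ?thesis using k by (simp add: prod_eq_iff)
qed

lemma trg: "g (v + (of_int k, 0)) = g v + (of_int k, 0)"
  by (metis fg gf tr)

lemma bdd: "\<exists>B. \<forall>p. a \<le> snd p \<and> snd p \<le> b \<longrightarrow> \<bar>snd (f p)\<bar> \<le> B \<and> \<bar>fst (f p) - fst p\<bar> \<le> B"
proof -
  have "compact (f ` ({0..1} \<times> {a..b}))"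
    by (intro compact_continuous_image contf compact_Times) auto
  then obtain B where B: "\<And>u. u \<in> f ` ({0..1} \<times> {a..b}) \<Longrightarrow> norm u \<le> B"
    using compact_imp_bounded bounded_iff by metis
  show ?thesis
  proof (intro exI allI impI)
    fix p :: "real \<times> real" assume p: "a \<le> snd p \<and> snd p \<le> b"
    define k where "k = \<lfloor>fst p\<rfloor>"
    have k1: "of_int k \<le> fst p" and k2: "fst p < of_int k + 1"
      using floor_correct[of "fst p"] unfolding k_def by linarith+
    define p' where "p' = (fst p - of_int k, snd p)"
    have p'in: "p' \<in> {0..1} \<times> {a..b}" using p k1 k2 unfolding p'_def
      by (simp add: mem_Times_iff)
    have pp: "p = p' + (of_int k, 0)" by (simp add: p'_def prod_eq_iff)
    have fp: "f p = f p' + (of_int k, 0)" using pp tr by simp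
    have n: "norm (f p') \<le> B" using B p'in by blast
    have a1: "norm (snd (f p')) \<le> norm (f p')" using norm_snd_le[where x="fst (f p')" and y="snd (f p')"] by simp
    have a2: "norm (fst (f p')) \<le> norm (f p')" using norm_fst_le[where x="fst (f p')" and y="snd (f p')"] by simp
    have "\<bar>snd (f p')\<bar> \<le> B" "\<bar>fst (f p')\<bar> \<le> B" using a1 a2 n
      by (simp_all only: real_norm_def)
    moreover have "fst p' \<in> {0..1}" using p'in by (auto simp: mem_Times_iff)
    ultimately show "\<bar>snd (f p)\<bar> \<le> B + 1 \<and> \<bar>fst (f p) - fst p\<bar> \<le> B + 1"
      using fp pp by auto
  qed
qed

end

context P65 begin

lemma dich:
  assumes "f ` hline d \<subseteq> Uminus d"
  shows "(\<forall>p. snd p \<le> d \<longrightarrow> snd (f p) < d) \<or> (\<forall>p. d \<le> snd p \<longrightarrow> snd (f p) < d)"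
proof -
  define B where "B = g ` {z. d \<le> snd z}"
  have "{z::real\<times>real. d \<le> snd z} = UNIV \<times> {d..}" by auto
  then have "convex {z::real\<times>real. d \<le> snd z}" by (simp add: convex_Times)
  then have conn: "connected B" unfolding B_def
    by (intro connected_continuous_image contg convex_connected)
  have o1: "open {z::real\<times>real. snd z < d}" by (intro open_Collect_less continuous_intros)
  have o2: "open {z::real\<times>real. d < snd z}" by (intro open_Collect_less continuous_intros)
  have sub: "B \<subseteq> {z. snd z < d} \<union> {z. d < snd z}"
  proof
    fix p assume "p \<in> B"
    then obtain q where q: "d \<le> snd q" "p = g q" unfolding B_def by auto
    have "snd p \<noteq> d"
    proof
      assume "snd p = d"
      then have "f p \<in> Uminus d" using assms by (auto simp: hline_def)
      then show False using q by (simp add: Uminus_def)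
    qed
    then show "p \<in> {z. snd z < d} \<union> {z. d < snd z}" by auto
  qed
  have "{z. snd z < d} \<inter> B = {} \<or> {z. d < snd z} \<inter> B = {}"
    by (rule connectedD[OF conn o1 o2]) (use sub in auto)
  then show ?thesis
  proof
    assume h: "{z. snd z < d} \<inter> B = {}"
    have "\<forall>p. snd p \<le> d \<longrightarrow> snd (f p) < d"
    proof (intro allI impI)
      fix p :: "real\<times>real" assume p: "snd p \<le> d"
      show "snd (f p) < d"
      proof (rule ccontr)
        assume "\<not> snd (f p) < d"
        then have "p \<in> B" unfolding B_def by (auto intro!: image_eqI[where x="f p"])
        then show False using h sub p by auto
      qed
    qed
    then show ?thesis ..
  next
    assume h: "{z. d < snd z} \<inter> B = {}"
    have "\<forall>p. d \<le> snd p \<longrightarrow> snd (f p) < d"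
    proof (intro allI impI)
      fix p :: "real\<times>real" assume p: "d \<le> snd p"
      show "snd (f p) < d"
      proof (rule ccontr)
        assume "\<not> snd (f p) < d"
        then have "p \<in> B" unfolding B_def by (auto intro!: image_eqI[where x="f p"])
        then show False using h sub p by auto
      qed
    qed
    then show ?thesis ..
  qed
qed

lemma H2_1: obtains w where "snd w = c 0" "snd (f w) = c 2"
  using H2[rule_format, of 1] by (auto simp: hline_def)

lemma good2: "snd p \<le> c 2 \<Longrightarrow> snd (f p) < c 2"
proof -
  assume p: "snd p \<le> c 2"
  have "f ` hline (c 2) \<subseteq> Uminus (c 2)" using push by auto
  from dich[OF this] have d: "(\<forall>p. snd p \<le> c 2 \<longrightarrow> snd (f p) < c 2) \<or> (\<forall>p. c 2 \<le> snd p \<longrightarrow> snd (f p) < c 2)" .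
  obtain w where w: "snd w = c 0" "snd (f w) = c 2" by (rule H2_1)
  have "\<not> (\<forall>p. c 2 \<le> snd p \<longrightarrow> snd (f p) < c 2)"
  proof
    assume h: "\<forall>p. c 2 \<le> snd p \<longrightarrow> snd (f p) < c 2"
    have "c 2 \<le> snd w" using w ord by simp
    then have "snd (f w) < c 2" using h by blast
    then show False using w by simp
  qed
  then have "\<forall>p. snd p \<le> c 2 \<longrightarrow> snd (f p) < c 2" using d by blast
  then show ?thesis using p by blast
qed

lemma good01: assumes j: "j \<le> 1" and p: "snd p \<le> c j" shows "snd (f p) < c j"
proof -
  have "f ` hline (c j) \<subseteq> Uminus (c j)" using push j by auto
  from dich[OF this] have d: "(\<forall>p. snd p \<le> c j \<longrightarrow> snd (f p) < c j) \<or> (\<forall>p. c j \<le> snd p \<longrightarrow> snd (f p) < c j)" .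
  have cj: "c 2 < c j" using ord j by (cases j) auto
  have "\<not> (\<forall>p. c j \<le> snd p \<longrightarrow> snd (f p) < c j)"
  proof
    assume bad: "\<forall>p. c j \<le> snd p \<longrightarrow> snd (f p) < c j"
    obtain B where B: "\<forall>p. c 2 \<le> snd p \<and> snd p \<le> c j \<longrightarrow> \<bar>snd (f p)\<bar> \<le> B \<and> \<bar>fst (f p) - fst p\<bar> \<le> B"
      using bdd by blast
    define q where "q = ((0::real), max (c j) (\<bar>B\<bar> + 1))"
    define p0 where "p0 = g q"
    have fp0: "f p0 = q" by (simp add: p0_def)
    show False
    proof (cases "c j \<le> snd p0")
      case True
      then have "snd (f p0) < c j" using bad by blast
      then show False using fp0 by (simp add: q_def)
    next
      case False
      show False
      proof (cases "snd p0 \<le> c 2")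
        case True then show False using good2[of p0] fp0 cj by (auto simp: q_def)
      next
        case False2: False
        then have "\<bar>snd (f p0)\<bar> \<le> B" using spec[OF B, of p0] False by linarith
        then show False using fp0 by (auto simp: q_def)
      qed
    qed
  qed
  then have "\<forall>p. snd p \<le> c j \<longrightarrow> snd (f p) < c j" using d by blast
  then show ?thesis using p by blast
qed

lemma good: "j \<le> 2 \<Longrightarrow> snd p \<le> c j \<Longrightarrow> snd (f p) < c j"
proof -
  assume a: "j \<le> 2" "snd p \<le> c j"
  show ?thesis
  proof (cases "j \<le> 1")
    case True show ?thesis using good01[OF True a(2)] .
  next
    case False then have "j = 2" using a by simp
    then show ?thesis using good2[of p] a by simp
  qed
qed

end


definition vec2 :: "real\<times>real \<Rightarrow> real^2" where
  "vec2 z = (\<chi> i. if i = 1 then fst z else snd z)"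

lemma vec2_1[simp]: "vec2 z $ 1 = fst z" and vec2_2[simp]: "vec2 z $ 2 = snd z"
  by (simp_all add: vec2_def)

lemma vec2_inj: "vec2 u = vec2 v \<Longrightarrow> u = v"
  by (metis vec2_1 vec2_2 prod_eq_iff)

lemma cont_vec2: "continuous_on S vec2"
  unfolding vec2_def
  apply (intro continuous_on_vec_lambda)
  subgoal for i by (cases "i = 1") (auto intro: continuous_intros)
  done

lemma fashoda_pair:
  fixes p q :: "real \<Rightarrow> real\<times>real"
  assumes "path p" "path q"
   "path_image p \<subseteq> {z. a1 \<le> fst z \<and> fst z \<le> b1 \<and> a2 \<le> snd z \<and> snd z \<le> b2}"
   "path_image q \<subseteq> {z. a1 \<le> fst z \<and> fst z \<le> b1 \<and> a2 \<le> snd z \<and> snd z \<le> b2}"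
   "fst (pathstart p) = a1" "fst (pathfinish p) = b1" "snd (pathstart q) = a2" "snd (pathfinish q) = b2"
  shows "path_image p \<inter> path_image q \<noteq> {}"
proof -
  let ?a = "vec2 (a1,a2)" let ?b = "vec2 (b1,b2)"
  have box: "vec2 ` {z. a1 \<le> fst z \<and> fst z \<le> b1 \<and> a2 \<le> snd z \<and> snd z \<le> b2} \<subseteq> cbox ?a ?b"
    by (auto simp: mem_box_cart forall_2)
  obtain z where "z \<in> path_image (vec2 \<circ> p)" "z \<in> path_image (vec2 \<circ> q)"
  proof (rule fashoda[of "vec2 \<circ> p" "vec2 \<circ> q" ?a ?b])
    show "path (vec2 \<circ> p)" "path (vec2 \<circ> q)"
      using assms by (auto intro!: path_continuous_image cont_vec2)
    show "path_image (vec2 \<circ> p) \<subseteq> cbox ?a ?b" "path_image (vec2 \<circ> q) \<subseteq> cbox ?a ?b"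
      using assms box by (auto simp: path_image_compose)
  qed (use assms in \<open>auto simp: pathstart_compose pathfinish_compose\<close>)
  then obtain u v where u: "u \<in> path_image p" "z = vec2 u" and v: "v \<in> path_image q" "z = vec2 v"
    by (auto simp: path_image_compose)
  then have "u = v" using vec2_inj by simp
  then show ?thesis using u v by blast
qed

lemma trim_path:
  fixes \<gamma> :: "real \<Rightarrow> real\<times>real" and h :: "real\<times>real \<Rightarrow> real"
  assumes \<gamma>: "path \<gamma>" and h: "continuous_on UNIV h"
    and s: "h (pathstart \<gamma>) \<le> \<alpha>" and ab: "\<alpha> < \<beta>" and e: "\<beta> \<le> h (pathfinish \<gamma>)"
  obtains \<delta> where "path \<delta>" "path_image \<delta> \<subseteq> path_image \<gamma>" "h (pathstart \<delta>) = \<alpha>"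
    "h (pathfinish \<delta>) = \<beta>" "\<forall>z\<in>path_image \<delta>. \<alpha> \<le> h z \<and> h z \<le> \<beta>"
proof -
  define F where "F = h \<circ> \<gamma>"
  have Fc: "continuous_on {0..1} F" unfolding F_def o_def
    by (rule continuous_on_compose2[OF h]) (use \<gamma> in \<open>auto simp: path_def\<close>)
  have F0: "F 0 \<le> \<alpha>" and F1: "\<beta> \<le> F 1" using s e by (auto simp: F_def pathstart_def pathfinish_def)
  define S1 where "S1 = {0..1} \<inter> F -` {\<beta>..}"
  have "closed S1" unfolding S1_def by (rule continuous_closed_preimage[OF Fc]) auto
  moreover have "bounded S1" unfolding S1_def by (rule bounded_subset[of "{0..1}"]) auto
  ultimately have cS1: "compact S1" by (simp add: compact_eq_bounded_closed)
  have "1 \<in> S1" using F1 by (simp add: S1_def)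
  then obtain t1 where t1: "t1 \<in> S1" "\<forall>y\<in>S1. t1 \<le> y" using compact_attains_inf[OF cS1] by blast
  have t1r: "0 \<le> t1" "t1 \<le> 1" "\<beta> \<le> F t1" using t1 by (auto simp: S1_def)
  have "\<exists>s. 0 \<le> s \<and> s \<le> t1 \<and> F s = \<beta>"
    using F0 ab t1r by (intro IVT') (auto intro: continuous_on_subset[OF Fc])
  then obtain s where s: "0 \<le> s" "s \<le> t1" "F s = \<beta>" by blast
  then have "s \<in> S1" using t1r by (simp add: S1_def)
  then have Ft1: "F t1 = \<beta>" using s t1 by force
  define S0 where "S0 = {0..t1} \<inter> F -` {..\<alpha>}"
  have "continuous_on {0..t1} F" using t1r by (auto intro: continuous_on_subset[OF Fc])
  then have "closed S0" unfolding S0_def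
    by (rule continuous_closed_preimage) auto
  moreover have "bounded S0" unfolding S0_def by (rule bounded_subset[of "{0..t1}"]) auto
  ultimately have cS0: "compact S0" by (simp add: compact_eq_bounded_closed)
  have "0 \<in> S0" using F0 t1r by (simp add: S0_def)
  then obtain t0 where t0: "t0 \<in> S0" "\<forall>y\<in>S0. y \<le> t0" using compact_attains_sup[OF cS0] by blast
  have t0r: "0 \<le> t0" "t0 \<le> t1" "F t0 \<le> \<alpha>" using t0 by (auto simp: S0_def)
  have "\<exists>s. t0 \<le> s \<and> s \<le> t1 \<and> F s = \<alpha>"
    using t0r Ft1 ab t1r by (intro IVT') (auto intro: continuous_on_subset[OF Fc])
  then obtain s' where s': "t0 \<le> s'" "s' \<le> t1" "F s' = \<alpha>" by blast
  then have "s' \<in> S0" using t0r by (simp add: S0_def)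
  then have Ft0: "F t0 = \<alpha>" using s' t0 by force
  have bnd: "\<alpha> \<le> F t \<and> F t \<le> \<beta>" if t: "t0 \<le> t" "t \<le> t1" for t
  proof
    show "\<alpha> \<le> F t"
    proof (cases "t = t0")
      case False
      then have "t \<notin> S0" using t0 t by force
      then show ?thesis using t t0r by (auto simp: S0_def)
    qed (simp add: Ft0)
    show "F t \<le> \<beta>"
    proof (cases "t = t1")
      case False
      then have "t \<notin> S1" using t1 t by force
      then show ?thesis using t t0r t1r by (auto simp: S1_def)
    qed (simp add: Ft1)
  qed
  show ?thesis
  proof
    show "path (subpath t0 t1 \<gamma>)" using \<gamma> t0r t1r by simp
    show "path_image (subpath t0 t1 \<gamma>) \<subseteq> path_image \<gamma>"
    proof -
      have "path_image (subpath t0 t1 \<gamma>) = \<gamma> ` {t0..t1}" using t0r by (simp add: path_image_subpath)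
      also have "\<dots> \<subseteq> \<gamma> ` {0..1}" using t0r t1r by (intro image_mono) auto
      finally show ?thesis by (simp add: path_image_def)
    qed
    show "h (pathstart (subpath t0 t1 \<gamma>)) = \<alpha>" using Ft0 by (simp add: F_def)
    show "h (pathfinish (subpath t0 t1 \<gamma>)) = \<beta>" using Ft1 by (simp add: F_def)
    show "\<forall>z\<in>path_image (subpath t0 t1 \<gamma>). \<alpha> \<le> h z \<and> h z \<le> \<beta>"
      using bnd t0r by (auto simp: path_image_subpath F_def)
  qed
qed



lemma strip_sep:
  fixes \<sigma> :: "real \<Rightarrow> real\<times>real"
  assumes \<sigma>: "path \<sigma>" "path_image \<sigma> \<subseteq> {z. a \<le> snd z \<and> snd z \<le> b}"
      "snd (pathstart \<sigma>) = a" "snd (pathfinish \<sigma>) = b"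
    and mM: "\<forall>z\<in>path_image \<sigma>. m \<le> fst z \<and> fst z \<le> M"
    and C: "connected C" "C \<subseteq> {z. a \<le> snd z \<and> snd z \<le> b}"
    and avoid: "\<forall>k::int. \<forall>z\<in>path_image \<sigma>. z + (of_int k, 0) \<notin> C"
    and pq: "p \<in> C" "q \<in> C"
  shows "fst q - fst p \<le> M - m + 3"
proof (rule ccontr)
  assume "\<not> ?thesis"
  then have big: "fst q - fst p > M - m + 3" by simp
  define k where "k = \<lfloor>fst p - m\<rfloor> + 1"
  have kk: "fst p - m < of_int k" "of_int k \<le> fst p - m + 1"
    using floor_correct[of "fst p - m"] unfolding k_def by linarith+
  define X1 where "X1 = m + of_int k"
  define X2 where "X2 = M + of_int k + 1"
  have "pathstart \<sigma> \<in> path_image \<sigma>" by (rule pathstart_in_path_image)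
  then have mleM: "m \<le> M" using mM by force
  have X: "fst p < X1" "X1 < X2" "X2 < fst q"
    using kk big mleM unfolding X1_def X2_def by linarith+
  define \<sigma>k where "\<sigma>k = (\<lambda>t. \<sigma> t + (of_int k, 0::real))"
  have p\<sigma>k: "path \<sigma>k" unfolding \<sigma>k_def using \<sigma>(1) by (auto simp: path_def intro: continuous_intros)
  have im\<sigma>k: "path_image \<sigma>k = (\<lambda>z. z + (of_int k, 0)) ` path_image \<sigma>"
    by (auto simp: path_image_def \<sigma>k_def)
  define S where "S = {z::real\<times>real. a \<le> snd z \<and> snd z \<le> b}"
  define S' where "S' = S \<inter> - path_image \<sigma>k"
  have "S = UNIV \<times> {a..b}" by (auto simp: S_def)
  then have "convex S" by (simp add: convex_Times)
  then have lS: "locally path_connected S" by (rule convex_imp_locally_path_connected)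
  have "closed (path_image \<sigma>k)" using p\<sigma>k by (simp add: closed_path_image)
  then have "openin (top_of_set S) S'" unfolding S'_def by (intro openin_open_Int) auto
  then have lS': "locally path_connected S'" by (rule locally_open_subset[OF lS])
  have CS': "C \<subseteq> S'"
  proof
    fix x assume x: "x \<in> C"
    have "x \<notin> path_image \<sigma>k"
    proof
      assume "x \<in> path_image \<sigma>k"
      then obtain z where "z \<in> path_image \<sigma>" "x = z + (of_int k, 0)" unfolding im\<sigma>k by auto
      then show False using avoid x by blast
    qed
    then show "x \<in> S'" using x C(2) unfolding S'_def S_def by auto
  qed
  have "C \<subseteq> connected_component_set S' p" by (rule connected_component_maximal[OF pq(1) C(1) CS'])
  then have "q \<in> path_component_set S' p" using pq(2) path_component_eq_connected_component[OF lS'] by auto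
  then obtain \<gamma> where \<gamma>: "path \<gamma>" "path_image \<gamma> \<subseteq> S'" "pathstart \<gamma> = p" "pathfinish \<gamma> = q"
    by (auto simp: path_component_def)
  obtain \<delta> where \<delta>: "path \<delta>" "path_image \<delta> \<subseteq> path_image \<gamma>" "fst (pathstart \<delta>) = X1"
    "fst (pathfinish \<delta>) = X2" "\<forall>z\<in>path_image \<delta>. X1 \<le> fst z \<and> fst z \<le> X2"
    by (rule trim_path[OF \<gamma>(1), of fst X1 X2]) (use X \<gamma> in \<open>auto intro: continuous_intros\<close>)
  have "path_image \<delta> \<inter> path_image \<sigma>k \<noteq> {}"
  proof (rule fashoda_pair[OF \<delta>(1) p\<sigma>k, of X1 X2 a b])
    show "path_image \<delta> \<subseteq> {z. X1 \<le> fst z \<and> fst z \<le> X2 \<and> a \<le> snd z \<and> snd z \<le> b}"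
      using \<delta>(2,5) \<gamma>(2) unfolding S'_def S_def by auto
    show "path_image \<sigma>k \<subseteq> {z. X1 \<le> fst z \<and> fst z \<le> X2 \<and> a \<le> snd z \<and> snd z \<le> b}"
      using mM \<sigma>(2) unfolding im\<sigma>k X1_def X2_def by auto
    show "snd (pathstart \<sigma>k) = a" "snd (pathfinish \<sigma>k) = b"
      using \<sigma>(3,4) by (auto simp: \<sigma>k_def pathstart_def pathfinish_def)
  qed (use \<delta> in auto)
  then show False using \<delta>(2) \<gamma>(2) unfolding S'_def by auto
qed



lemma abs_fst_le: "\<bar>fst (z::real\<times>real)\<bar> \<le> norm z"
  using norm_fst_le[where x="fst z" and y="snd z"] by simp

context P65 begin

lemma fgn: "(f^^n) ((g^^n) y) = y"
proof (induction n arbitrary: y)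
  case (Suc n)
  have "(f^^Suc n) ((g^^Suc n) y) = f ((f^^n) ((g^^n) (g y)))"
    by (simp only: funpow.simps(2)[of n f] funpow_Suc_right[of n g] comp_apply)
  then show ?case using Suc by simp
qed simp

lemma gfn: "(g^^n) ((f^^n) y) = y"
proof (induction n arbitrary: y)
  case (Suc n)
  have "(g^^Suc n) ((f^^Suc n) y) = g ((g^^n) ((f^^n) (f y)))"
    by (simp only: funpow.simps(2)[of n g] funpow_Suc_right[of n f] comp_apply)
  then show ?case using Suc by simp
qed simp

lemma contfn: "continuous_on A (f^^n)"
proof (induction n)
  case 0 then show ?case by (simp add: continuous_on_id)
next
  case (Suc n)
  show ?case unfolding funpow.simps(2) comp_def
    by (rule continuous_on_compose2[OF contf[of UNIV] Suc.IH]) auto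
qed

lemma contgn: "continuous_on A (g^^n)"
proof (induction n)
  case 0 then show ?case by (simp add: continuous_on_id)
next
  case (Suc n)
  show ?case unfolding funpow.simps(2) comp_def
    by (rule continuous_on_compose2[OF contg[of UNIV] Suc.IH]) auto
qed

lemma img_fn: "(f^^n) ` A = (g^^n) -` A"
proof
  show "(f^^n) ` A \<subseteq> (g^^n) -` A" using gfn by auto
  show "(g^^n) -` A \<subseteq> (f^^n) ` A"
  proof
    fix y assume "y \<in> (g^^n) -` A"
    then show "y \<in> (f^^n) ` A" using fgn[of n y] by (metis image_eqI vimageE)
  qed
qed

lemma closed_img_fn: "closed A \<Longrightarrow> closed ((f^^n) ` A)"
  using continuous_closed_preimage[OF contgn[of UNIV n], of A] by (simp add: img_fn)

lemma iter_le: "j \<le> 2 \<Longrightarrow> snd q \<le> c j \<Longrightarrow> snd ((f^^n) q) \<le> c j"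
proof (induction n)
  case (Suc n)
  then show ?case using good[of j "(f^^n) q"] by simp
qed simp

lemma iter_lt: "j \<le> 2 \<Longrightarrow> snd q < c j \<Longrightarrow> snd ((f^^n) q) < c j"
proof (induction n)
  case (Suc n)
  then show ?case using good[of j "(f^^n) q"] by simp
qed simp

lemma barrier:
  obtains \<sigma> w where "path \<sigma>" "path_image \<sigma> \<subseteq> {z. c 2 \<le> snd z \<and> snd z \<le> c 0}"
    "snd (pathstart \<sigma>) = c 2" "snd (pathfinish \<sigma>) = c 0" "snd w = c 0" "snd (f w) = c 2"
    "\<forall>u\<in>path_image \<sigma>. u = f w \<or> (\<exists>v. u = f v \<and> c 0 < snd v)"
proof -
  obtain w where w: "snd w = c 0" "snd (f w) = c 2" by (rule H2_1)
  define q0 where "q0 = ((0::real), c 0)"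
  define p0 where "p0 = g q0"
  have fp0: "f p0 = q0" by (simp add: p0_def)
  have p0: "c 0 < snd p0"
  proof (rule ccontr)
    assume "\<not> c 0 < snd p0"
    then have "snd (f p0) < c 0" using good[of 0 p0] by simp
    then show False using fp0 by (simp add: q0_def)
  qed
  define \<sigma>0 where "\<sigma>0 = (\<lambda>t. f (w + t *\<^sub>R (p0 - w)))"
  have p\<sigma>0: "path \<sigma>0" unfolding \<sigma>0_def path_def
    by (rule continuous_on_compose2[OF contf[of UNIV]])
      (auto intro!: continuous_on_add continuous_on_const continuous_on_scaleR continuous_on_id)
  have s0: "pathstart \<sigma>0 = f w" and f0: "pathfinish \<sigma>0 = q0"
    by (simp_all add: \<sigma>0_def pathstart_def pathfinish_def fp0)
  have im0: "\<forall>u\<in>path_image \<sigma>0. u = f w \<or> (\<exists>v. u = f v \<and> c 0 < snd v)"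
  proof
    fix u assume "u \<in> path_image \<sigma>0"
    then obtain t where t: "t \<in> {0..1}" "u = \<sigma>0 t" by (auto simp: path_image_def)
    show "u = f w \<or> (\<exists>v. u = f v \<and> c 0 < snd v)"
    proof (cases "t = 0")
      case True then show ?thesis using t by (simp add: \<sigma>0_def)
    next
      case False
      then have tp: "0 < t" using t by auto
      have "snd (w + t *\<^sub>R (p0 - w)) = c 0 + t * (snd p0 - c 0)" using w by simp
      moreover have "0 < t * (snd p0 - c 0)" using tp p0 by simp
      ultimately have "c 0 < snd (w + t *\<^sub>R (p0 - w))" by linarith
      then have "u = f (w + t *\<^sub>R (p0 - w)) \<and> c 0 < snd (w + t *\<^sub>R (p0 - w))"
        using t by (simp add: \<sigma>0_def)
      then show ?thesis by blast
    qed
  qed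
  obtain \<sigma> where \<sigma>: "path \<sigma>" "path_image \<sigma> \<subseteq> path_image \<sigma>0" "snd (pathstart \<sigma>) = c 2"
    "snd (pathfinish \<sigma>) = c 0" "\<forall>z\<in>path_image \<sigma>. c 2 \<le> snd z \<and> snd z \<le> c 0"
    by (rule trim_path[OF p\<sigma>0, of snd "c 2" "c 0"]) (use s0 f0 w ord in \<open>auto intro: continuous_intros simp: q0_def\<close>)
  show ?thesis
  proof (rule that[OF \<sigma>(1) _ \<sigma>(3,4) w])
    show "path_image \<sigma> \<subseteq> {z. c 2 \<le> snd z \<and> snd z \<le> c 0}" using \<sigma>(5) by auto
    show "\<forall>u\<in>path_image \<sigma>. u = f w \<or> (\<exists>v. u = f v \<and> c 0 < snd v)" using \<sigma>(2) im0 by blast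
  qed
qed

end


locale P65i = P65 + fixes i :: nat assumes i1: "i \<le> 1"
begin

definition K :: "nat \<Rightarrow> (real\<times>real) set" where
  "K n = (f^^n) ` {z. snd z \<le> c i} \<inter> {z. c (Suc i) \<le> snd z}"

lemma ci: "c i \<le> c 0" "c 2 \<le> c (Suc i)" "c (Suc i) < c i" "Suc i \<le> 2" "i \<le> 2"
  using ord i1 by (cases i; auto simp: numeral_2_eq_2)+

lemma Lam: "Lambda_minus f c i = (\<Inter>n. K n)"
  by (simp add: Lambda_minus_def K_def closure_Uminus closure_Uplus)

lemma closedK: "closed (K n)"
  unfolding K_def
  by (intro closed_Int closed_img_fn closed_Collect_le continuous_intros)

lemma K_mono: "K (Suc n) \<subseteq> K n"
proof
  fix y assume "y \<in> K (Suc n)"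
  then obtain p where p: "snd p \<le> c i" "y = (f^^Suc n) p" "c (Suc i) \<le> snd y"
    unfolding K_def by blast
  have y: "y = (f^^n) (f p)" using p(2) by (simp add: funpow_Suc_right del: funpow.simps)
  have "snd (f p) \<le> c i" using good[OF ci(5) p(1)] by simp
  then have "y \<in> (f^^n) ` {z. snd z \<le> c i}" using y by blast
  then show "y \<in> K n" using p unfolding K_def by auto
qed

lemma K_anti: "m \<le> n \<Longrightarrow> K n \<subseteq> K m"
  by (rule lift_Suc_antimono_le[of K, OF K_mono])

lemma K1: "K 1 = f ` {z. snd z \<le> c i} \<inter> {z. c (Suc i) \<le> snd z}"
  by (simp add: K_def)

lemma K1': "K (Suc 0) = f ` {z. snd z \<le> c i} \<inter> {z. c (Suc i) \<le> snd z}"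
  by (simp add: K_def)

lemma K1_strip: "K 1 \<subseteq> {z. c 2 \<le> snd z \<and> snd z \<le> c 0}"
proof
  fix y assume "y \<in> K 1"
  then obtain p where p: "snd p \<le> c i" "y = f p" "c (Suc i) \<le> snd y" by (auto simp: K1 K1')
  have "snd (f p) < c i" using good[OF ci(5) p(1)] .
  then show "y \<in> {z. c 2 \<le> snd z \<and> snd z \<le> c 0}" using p ci by auto
qed

lemma sep_ex: "\<exists>W. \<forall>C p q. connected C \<and> C \<subseteq> K 1 \<and> p \<in> C \<and> q \<in> C \<longrightarrow> fst q - fst p \<le> W"
proof -
  obtain \<sigma> w where \<sigma>: "path \<sigma>" "path_image \<sigma> \<subseteq> {z. c 2 \<le> snd z \<and> snd z \<le> c 0}"
    "snd (pathstart \<sigma>) = c 2" "snd (pathfinish \<sigma>) = c 0" "snd w = c 0" "snd (f w) = c 2"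
    "\<forall>u\<in>path_image \<sigma>. u = f w \<or> (\<exists>v. u = f v \<and> c 0 < snd v)"
    by (rule barrier)
  have "bounded (path_image \<sigma>)" using \<sigma>(1) by (simp add: compact_imp_bounded compact_path_image)
  then obtain B where B: "\<forall>z\<in>path_image \<sigma>. norm z \<le> B" by (auto simp: bounded_iff)
  have mM: "\<forall>z\<in>path_image \<sigma>. -B \<le> fst z \<and> fst z \<le> B"
  proof
    fix z assume "z \<in> path_image \<sigma>"
    then have "norm z \<le> B" using B by blast
    then show "-B \<le> fst z \<and> fst z \<le> B" using abs_fst_le[of z] by linarith
  qed
  have "\<forall>C p q. connected C \<and> C \<subseteq> K 1 \<and> p \<in> C \<and> q \<in> C \<longrightarrow> fst q - fst p \<le> B - (-B) + 3"
  proof (intro allI impI)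
    fix C p q assume "connected C \<and> C \<subseteq> K 1 \<and> p \<in> C \<and> q \<in> C"
    then have C: "connected C" "C \<subseteq> K 1" "p \<in> C" "q \<in> C" by auto
    have avoid: "\<forall>k::int. \<forall>z\<in>path_image \<sigma>. z + (of_int k, 0) \<notin> C"
    proof (intro allI ballI notI)
      fix k :: int and z assume z: "z \<in> path_image \<sigma>" and zk: "z + (of_int k, 0) \<in> C"
      then have "z + (of_int k,0) \<in> K 1" using C by auto
      then have zK: "z + (of_int k,0) \<in> f ` {z. snd z \<le> c i} \<inter> {z. c (Suc i) \<le> snd z}"
        unfolding K1 .
      then obtain u where u0: "u \<in> {z. snd z \<le> c i}" "z + (of_int k, 0) = f u" by blast
      have u: "snd u \<le> c i" "z + (of_int k, 0) = f u" "c (Suc i) \<le> snd (z + (of_int k, 0))"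
        using u0 zK by auto
      from \<sigma>(7) z consider "z = f w" | v where "z = f v" "c 0 < snd v" by blast
      then show False
      proof cases
        case 1
        then have "f u = f (w + (of_int k, 0))" using u tr by simp
        then have "u = w + (of_int k, 0)" using injf by (simp add: inj_eq)
        then have "snd u = c 0" using \<sigma>(5) by simp
        then have "i = 0" using u(1) ord i1 by (cases i) auto
        then show False using u(3) 1 \<sigma>(6) ord by simp
      next
        case 2
        then have "f u = f (v + (of_int k, 0))" using u tr by simp
        then have "u = v + (of_int k,0)" using injf by (simp add: inj_eq)
        then show False using u(1) 2 ci by simp
      qed
    qed
    have "C \<subseteq> {z. c 2 \<le> snd z \<and> snd z \<le> c 0}" using C(2) K1_strip by blast
    then show "fst q - fst p \<le> B - (-B) + 3"
      by (rule strip_sep[OF \<sigma>(1,2,3,4) mM C(1) _ avoid C(3,4)])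
  qed
  then show ?thesis by blast
qed

end


context P65i begin

abbreviation "LamS \<equiv> Lambda_minus f c i"

lemma closed_hline: "closed (hline d)"
  unfolding hline_def by (intro closed_Collect_eq continuous_intros)

lemma LamSsub_K: "LamS \<subseteq> K n" by (auto simp: Lam)

lemma closed_Lam: "closed LamS"
  unfolding Lam by (intro closed_INT ballI closedK)

lemma LamSband: "LamS \<subseteq> band c i"
  using LamSsub_K[of 0] by (auto simp: K_def band_def)

lemma spread_ex: "\<exists>W. 0 \<le> W \<and> (\<forall>C p q. connected C \<and> C \<subseteq> K 1 \<and> p \<in> C \<and> q \<in> C \<longrightarrow> \<bar>fst q - fst p\<bar> \<le> W)"
proof -
  obtain W where W: "\<forall>C p q. connected C \<and> C \<subseteq> K 1 \<and> p \<in> C \<and> q \<in> C \<longrightarrow> fst q - fst p \<le> W"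
    using sep_ex by blast
  have "\<forall>C p q. connected C \<and> C \<subseteq> K 1 \<and> p \<in> C \<and> q \<in> C \<longrightarrow> \<bar>fst q - fst p\<bar> \<le> \<bar>W\<bar>"
  proof (intro allI impI)
    fix C p q assume h: "connected C \<and> C \<subseteq> K 1 \<and> p \<in> C \<and> q \<in> C"
    have "fst q - fst p \<le> W" using W h by blast
    moreover have "fst p - fst q \<le> W" using W h by blast
    ultimately show "\<bar>fst q - fst p\<bar> \<le> \<bar>W\<bar>" by linarith
  qed
  then show ?thesis by (intro exI[of _ "\<bar>W\<bar>"]) simp
qed

lemma bounded_K1: "connected C \<Longrightarrow> C \<subseteq> K 1 \<Longrightarrow> bounded C"
proof (cases "C = {}")
  case False
  assume C: "connected C" "C \<subseteq> K 1"
  obtain W where W: "0 \<le> W" "\<forall>C p q. connected C \<and> C \<subseteq> K 1 \<and> p \<in> C \<and> q \<in> C \<longrightarrow> \<bar>fst q - fst p\<bar> \<le> W"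
    using spread_ex by blast
  obtain x where x: "x \<in> C" using False by blast
  have "C \<subseteq> {fst x - W..fst x + W} \<times> {c 2..c 0}"
  proof
    fix q assume q: "q \<in> C"
    have "\<bar>fst q - fst x\<bar> \<le> W" using W(2) C x q by blast
    moreover have "c 2 \<le> snd q \<and> snd q \<le> c 0" using K1_strip C(2) q by blast
    ultimately show "q \<in> {fst x - W..fst x + W} \<times> {c 2..c 0}"
      by (cases q) auto
  qed
  then show ?thesis
    by (rule bounded_subset[OF bounded_Times[OF compact_imp_bounded[OF compact_Icc] compact_imp_bounded[OF compact_Icc]]])
qed simp

lemma compact_conn: "closed S \<Longrightarrow> S \<subseteq> K 1 \<Longrightarrow> compact (connected_component_set S x)"
proof -
  assume S: "closed S" "S \<subseteq> K 1"
  have "bounded (connected_component_set S x)"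
    using bounded_K1[OF connected_connected_component] connected_component_subset S(2) by blast
  moreover have "closed (connected_component_set S x)" using S(1) by (rule closed_connected_component)
  ultimately show ?thesis by (simp add: compact_eq_bounded_closed)
qed

lemma g_Lam: "u \<in> LamS \<Longrightarrow> g u \<in> LamS"
proof -
  assume u: "u \<in> LamS"
  have "g u \<in> K n" for n
  proof -
    have "u \<in> K (Suc n)" using u LamSsub_K by blast
    then obtain p where p: "snd p \<le> c i" "u = (f^^Suc n) p" "c (Suc i) \<le> snd u"
      unfolding K_def by blast
    have gu: "g u = (f^^n) p" using p(2) by simp
    have "c (Suc i) \<le> snd (g u)"
    proof (rule ccontr)
      assume "\<not> c (Suc i) \<le> snd (g u)"
      then have "snd (f (g u)) < c (Suc i)" using good[OF ci(4), of "g u"] by simp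
      then show False using p(3) by simp
    qed
    then show ?thesis using p(1) gu unfolding K_def by blast
  qed
  then show ?thesis by (simp add: Lam)
qed

lemma inv_f_g: "inv f y = g y"
  by (rule inv_f_eq[OF injf]) simp

lemma invCC: "inv f ` connected_component_set LamS x \<subseteq> connected_component_set LamS (inv f x)"
proof (cases "x \<in> LamS")
  case False
  then have "connected_component_set LamS x = {}" by (metis connected_component_eq_empty)
  then show ?thesis by (metis empty_subsetI image_empty)
next
  case True
  have e: "inv f ` connected_component_set LamS x = g ` connected_component_set LamS x"
    by (simp add: inv_f_g)
  have "g ` connected_component_set LamS x \<subseteq> connected_component_set LamS (g x)"
  proof (rule connected_component_maximal)
    show "g x \<in> g ` connected_component_set LamS x" using True by (simp add: connected_component_refl)
    show "connected (g ` connected_component_set LamS x)"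
      by (intro connected_continuous_image contg connected_connected_component)
    show "g ` connected_component_set LamS x \<subseteq> LamS"
      using g_Lam connected_component_subset by blast
  qed
  then show ?thesis using e by (simp add: inv_f_g)
qed

end


context P65i begin

lemma seg: "x \<in> K n \<Longrightarrow> connected_component_set (K n) x \<inter> hline (c (Suc i)) \<noteq> {}"
proof -
  assume xK: "x \<in> K n"
  then obtain p where p: "snd p \<le> c i" "x = (f^^n) p" and sx: "c (Suc i) \<le> snd x"
    unfolding K_def by blast
  define \<phi> where "\<phi> t = (f^^n) (p - (0, t))" for t :: real
  have c\<phi>: "continuous_on A \<phi>" for A
    unfolding \<phi>_def
    by (rule continuous_on_compose2[OF contfn[of UNIV n]])
      (auto intro!: continuous_on_diff continuous_on_const continuous_on_Pair continuous_on_id)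
  define F where "F t = snd (\<phi> t)" for t
  have cF: "continuous_on A F" for A
    unfolding F_def by (intro continuous_on_snd c\<phi>)
  define T0 where "T0 = max 0 (snd p - c (Suc i) + 1)"
  have T0: "0 \<le> T0" unfolding T0_def by simp
  have "snd (p - (0, T0)) < c (Suc i)" unfolding T0_def by simp
  then have FT0: "F T0 < c (Suc i)" unfolding F_def \<phi>_def using iter_lt[OF ci(4)] by blast
  define A where "A = {0..T0} \<inter> F -` {..c (Suc i)}"
  have "closed A" unfolding A_def by (rule continuous_closed_preimage[OF cF]) auto
  moreover have "bounded A" unfolding A_def by (rule bounded_subset[of "{0..T0}"]) auto
  ultimately have cA: "compact A" by (simp add: compact_eq_bounded_closed)
  have "T0 \<in> A" using T0 FT0 by (simp add: A_def)
  then obtain ts where ts: "ts \<in> A" "\<forall>y\<in>A. ts \<le> y" using compact_attains_inf[OF cA] by blast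
  have tsr: "0 \<le> ts" "ts \<le> T0" "F ts \<le> c (Suc i)" using ts by (auto simp: A_def)
  have "p - (0, 0) = p" by (simp add: prod_eq_iff)
  then have F0: "F 0 = snd x" using p by (simp add: F_def \<phi>_def)
  have "\<exists>s. 0 \<le> s \<and> s \<le> ts \<and> F s = c (Suc i)"
    by (rule IVT2') (use tsr F0 sx cF in auto)
  then obtain s where s: "0 \<le> s" "s \<le> ts" "F s = c (Suc i)" by blast
  then have "s \<in> A" using tsr by (simp add: A_def)
  then have Fts: "F ts = c (Suc i)" using s ts by force
  define Seg where "Seg = \<phi> ` {0..ts}"
  have "connected Seg" unfolding Seg_def by (intro connected_continuous_image c\<phi> connected_Icc)
  moreover have "x \<in> Seg"
  proof -
    have "p - (0, 0) = p" by (simp add: prod_eq_iff)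
    then have "x = \<phi> 0" using p by (simp add: \<phi>_def)
    then show ?thesis unfolding Seg_def using tsr by auto
  qed
  moreover have "Seg \<subseteq> K n"
  proof
    fix y assume "y \<in> Seg"
    then obtain t where t: "0 \<le> t" "t \<le> ts" "y = \<phi> t" unfolding Seg_def by auto
    have y1: "y \<in> (f^^n) ` {z. snd z \<le> c i}"
    proof -
      have "snd (p - (0, t)) \<le> c i" using p(1) t by simp
      then show ?thesis using t(3) unfolding \<phi>_def by blast
    qed
    have "c (Suc i) \<le> F t"
    proof (cases "t = ts")
      case False
      then have "t \<notin> A" using ts t by force
      then show ?thesis using t tsr by (auto simp: A_def)
    qed (simp add: Fts)
    then show "y \<in> K n" using y1 t(3) unfolding K_def F_def by auto
  qed
  ultimately have "Seg \<subseteq> connected_component_set (K n) x"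
    by (intro connected_component_maximal)
  moreover have "\<phi> ts \<in> Seg" unfolding Seg_def using tsr by auto
  moreover have "\<phi> ts \<in> hline (c (Suc i))" using Fts by (simp add: hline_def F_def)
  ultimately show ?thesis by blast
qed

lemma meets: "x \<in> LamS \<Longrightarrow> connected_component_set LamS x \<inter> hline (c (Suc i)) \<noteq> {}"
proof -
  assume x: "x \<in> LamS"
  define D where "D n = connected_component_set (K (Suc n)) x" for n
  have xK: "x \<in> K n" for n using x LamSsub_K by blast
  have K1: "K (Suc n) \<subseteq> K 1" for n by (rule K_anti) simp
  have cD: "compact (D n)" for n unfolding D_def by (rule compact_conn[OF closedK K1])
  have connD: "connected (D n)" for n unfolding D_def by simp
  have nest: "D n \<subseteq> D m" if "m \<le> n" for m n
    unfolding D_def by (rule connected_component_mono) (rule K_anti, use that in simp)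
  define E where "E n = D n \<inter> hline (c (Suc i))" for n
  have cE: "compact (E n)" for n unfolding E_def by (intro compact_Int_closed cD closed_hline)
  have nE: "E n \<noteq> {}" for n unfolding E_def D_def by (rule seg[OF xK])
  have nestE: "E n \<subseteq> E m" if "m \<le> n" for m n unfolding E_def using nest[OF that] by auto
  have "\<Inter>(range E) \<noteq> {}" by (rule compact_nest[OF cE nE nestE])
  then obtain y where y: "\<forall>n. y \<in> E n" by blast
  have cI: "connected (\<Inter>(range D))" by (rule connected_nest[OF cD connD nest])
  have IL: "\<Inter>(range D) \<subseteq> LamS"
  proof
    fix u assume u: "u \<in> \<Inter>(range D)"
    have "u \<in> K n" for n
    proof -
      have "u \<in> D n" using u by blast
      then have "u \<in> K (Suc n)" unfolding D_def using connected_component_subset by blast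
      then show ?thesis using K_mono by blast
    qed
    then show "u \<in> LamS" by (simp add: Lam)
  qed
  have "x \<in> \<Inter>(range D)" unfolding D_def using xK by (auto simp: connected_component_refl)
  then have "\<Inter>(range D) \<subseteq> connected_component_set LamS x"
    by (rule connected_component_maximal[OF _ cI IL])
  moreover have "y \<in> \<Inter>(range D)" "y \<in> hline (c (Suc i))" using y unfolding E_def by auto
  ultimately show ?thesis by blast
qed

end


theorem proposition6p5:
  fixes f :: "real \<times> real \<Rightarrow> real \<times> real"
    and c :: "nat \<Rightarrow> real"
    and i :: nat
  assumes homeo: "\<exists>g. homeomorphism UNIV UNIV f g"
    and isot: "isotopic_to_id f"
    and commT: "\<forall>z. f (T z) = T (f z)"
    and H1_order: "c 0 > c 1" "c 1 > c 2"
    and H1_push: "\<forall>j\<le>2. f ` hline (c j) \<subseteq> Uminus (c j)"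
    and H2: "\<forall>n::nat. n \<ge> 1 \<longrightarrow> (f ^^ n) ` hline (c 0) \<inter> hline (c 2) \<noteq> {}"
    and i01: "i \<in> {0, 1}"
  shows "(\<forall>x\<in>Lambda_minus f c i.
            compact (connected_component_set (Lambda_minus f c i) x) \<and>
            connected_component_set (Lambda_minus f c i) x \<subseteq> band c i \<and>
            connected_component_set (Lambda_minus f c i) x \<inter> hline (c (Suc i)) \<noteq> {} \<and>
            inv f ` connected_component_set (Lambda_minus f c i) x
              \<subseteq> connected_component_set (Lambda_minus f c i) (inv f x))
       \<and> (\<exists>M>0. \<forall>x\<in>Lambda_minus f c i.
            diameter (fst ` connected_component_set (Lambda_minus f c i) x) < M)"
proof -
  obtain g where hom: "homeomorphism UNIV UNIV f g" using homeo by blast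
  have i1: "i \<le> 1" using i01 by auto
  interpret P: P65i f g c i
    by unfold_locales (use hom commT H1_order H1_push H2 i1 in auto)
  have LK: "Lambda_minus f c i \<subseteq> P.K 1" by (rule P.LamSsub_K)
  have part1: "\<forall>x\<in>Lambda_minus f c i.
            compact (connected_component_set (Lambda_minus f c i) x) \<and>
            connected_component_set (Lambda_minus f c i) x \<subseteq> band c i \<and>
            connected_component_set (Lambda_minus f c i) x \<inter> hline (c (Suc i)) \<noteq> {} \<and>
            inv f ` connected_component_set (Lambda_minus f c i) x
              \<subseteq> connected_component_set (Lambda_minus f c i) (inv f x)"
  proof
    fix x assume x: "x \<in> Lambda_minus f c i"
    have "compact (connected_component_set (Lambda_minus f c i) x)"
      by (rule P.compact_conn[OF P.closed_Lam LK])
    moreover have "connected_component_set (Lambda_minus f c i) x \<subseteq> band c i"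
      using connected_component_subset P.LamSband by blast
    moreover have "connected_component_set (Lambda_minus f c i) x \<inter> hline (c (Suc i)) \<noteq> {}"
      by (rule P.meets[OF x])
    moreover have "inv f ` connected_component_set (Lambda_minus f c i) x
              \<subseteq> connected_component_set (Lambda_minus f c i) (inv f x)"
      by (rule P.invCC)
    ultimately show "compact (connected_component_set (Lambda_minus f c i) x) \<and>
            connected_component_set (Lambda_minus f c i) x \<subseteq> band c i \<and>
            connected_component_set (Lambda_minus f c i) x \<inter> hline (c (Suc i)) \<noteq> {} \<and>
            inv f ` connected_component_set (Lambda_minus f c i) x
              \<subseteq> connected_component_set (Lambda_minus f c i) (inv f x)" by blast
  qed
  obtain W where W: "0 \<le> W" "\<forall>C p q. connected C \<and> C \<subseteq> P.K 1 \<and> p \<in> C \<and> q \<in> C \<longrightarrow> \<bar>fst q - fst p\<bar> \<le> W"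
    using P.spread_ex by blast
  have part2: "\<forall>x\<in>Lambda_minus f c i.
            diameter (fst ` connected_component_set (Lambda_minus f c i) x) < W + 1"
  proof
    fix x assume x: "x \<in> Lambda_minus f c i"
    define CC where "CC = connected_component_set (Lambda_minus f c i) x"
    have CCK: "CC \<subseteq> P.K 1" unfolding CC_def using connected_component_subset LK by blast
    have "diameter (fst ` CC) \<le> W"
    proof (rule diameter_le)
      show "fst ` CC \<noteq> {} \<or> 0 \<le> W" using W(1) by simp
      fix a b assume "a \<in> fst ` CC" "b \<in> fst ` CC"
      then obtain u v where u: "u \<in> CC" "a = fst u" and v: "v \<in> CC" "b = fst v" by blast
      have "connected CC" unfolding CC_def by simp
      then have "\<bar>fst u - fst v\<bar> \<le> W" using W(2) CCK u v by blast
      then show "norm (a - b) \<le> W" using u v by simp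
    qed
    then show "diameter (fst ` connected_component_set (Lambda_minus f c i) x) < W + 1"
      unfolding CC_def by simp
  qed
  have "W + 1 > 0" using W(1) by simp
  then show ?thesis using part1 part2 by blast
qed


end
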